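(* Let $n\ge2$, let $\mathscr{I}'=\{I'_1,\dots,I'_{m}\}$ be a partition of $\{1,\dots,n\}$ into nonempty consecutive blocks, and let $(\rho,V)$ be a nontrivial irreducible finite-dimensional representation of $\mathrm{SL}_n$ defined over $\mathbb{Q}$, with a norm $\|\cdot\|$ on $V(\mathbb{R})$. Let $V^{\mathrm{K}_{\mathscr{I}'}\mathrm{U}_{\mathscr{I}'}}$ be the subspace of vectors fixed by $\rho(\mathrm{K}_{\mathscr{I}'}\mathrm{U}_{\mathscr{I}'})$. Then there exists $C_2>0$ such that for all $v\in V^{\mathrm{K}_{\mathscr{I}'}\mathrm{U}_{\mathscr{I}'}}$ and all $d\in\mathrm{A}^+_{\mathrm{M}_{\mathscr{I}'}}$, $\|\rho(d)v\|\ge C_2\|v\|$.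
   Context: Consecutive blocks: $i_1<i_2$ whenever $i_1\in I'_{s}$, $i_2\in I'_t$, $s<t$. $\mathrm{U}_{\mathscr{I}'}:=\{g\in\mathrm{SL}_n(\mathbb{R}):(\mathrm{id}-g)\mathbb{R}^{I'_t}\subset\mathbb{R}^{I'_1\cup\dots\cup I'_{t-1}}\ \forall t\}$; $\mathrm{K}_{\mathscr{I}'}$ is the group of block-diagonal matrices (blocks indexed by the $I'_t$) each block lying in $\mathrm{SO}_{|I'_t|}(\mathbb{R})$. $\mathrm{A}^+_{\mathrm{M}_{\mathscr{I}'}}$ is the set of diagonal matrices $\mathrm{diag}(d_1,\dots,d_n)$ with positive entries, $\prod_{i\in I'_t}d_i=1$ for every $t$, and $d_{i+1}/d_i\ge1$ whenever $i,i+1$ lie in the same block. *)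

theory Defs
  imports "HOL-Analysis.Analysis"
begin

text \<open>Matrices in SL_n(R): index type 'n, finite and linearly ordered (a copy of {1..n}).\<close>
definition SL :: "(real^'n^'n) set" where
  "SL = {g. det g = 1}"

text \<open>Restriction to matrices of a polynomial in the n^2 matrix entries with rational coefficients.\<close>
definition rat_poly_fun :: "(real^'n^'n \<Rightarrow> real) \<Rightarrow> bool" where
  "rat_poly_fun f \<longleftrightarrow>
     (\<exists>(S :: ('n \<times> 'n \<Rightarrow> nat) set) (c :: ('n \<times> 'n \<Rightarrow> nat) \<Rightarrow> rat).
        finite S \<and>
        (\<forall>g. f g = (\<Sum>e\<in>S. of_rat (c e) * (\<Prod>p\<in>UNIV. (g $ fst p $ snd p) ^ e p))))"

text \<open>A finite-dimensional representation of SL_n defined over Q: V(R) = R^'m with its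
  standard Q-structure, rho a group homomorphism on SL_n(R) whose matrix coefficients are
  polynomials with rational coefficients in the matrix entries.\<close>
definition rat_rep :: "(real^'n^'n \<Rightarrow> real^'m^'m) \<Rightarrow> bool" where
  "rat_rep \<rho> \<longleftrightarrow>
     \<rho> (mat 1) = mat 1 \<and>
     (\<forall>g\<in>SL. \<forall>h\<in>SL. \<rho> (g ** h) = \<rho> g ** \<rho> h) \<and>
     (\<forall>a b. rat_poly_fun (\<lambda>g. \<rho> g $ a $ b))"

definition irreducible_rep :: "(real^'n^'n \<Rightarrow> real^'m^'m) \<Rightarrow> bool" where
  "irreducible_rep \<rho> \<longleftrightarrow>
     (\<forall>W. subspace W \<and> (\<forall>g\<in>SL. \<forall>w\<in>W. \<rho> g *v w \<in> W) \<longrightarrow> W = {0} \<or> W = UNIV)"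

definition nontrivial_rep :: "(real^'n^'n \<Rightarrow> real^'m^'m) \<Rightarrow> bool" where
  "nontrivial_rep \<rho> \<longleftrightarrow> (\<exists>g\<in>SL. \<rho> g \<noteq> mat 1)"

text \<open>An arbitrary norm on V(R).\<close>
definition is_norm :: "(real^'m \<Rightarrow> real) \<Rightarrow> bool" where
  "is_norm N \<longleftrightarrow> (\<forall>x y. N (x + y) \<le> N x + N y) \<and> (\<forall>c x. N (c *\<^sub>R x) = \<bar>c\<bar> * N x)
                 \<and> (\<forall>x. N x = 0 \<longrightarrow> x = 0)"

text \<open>Partition of the index set into nonempty consecutive blocks I'_1,...,I'_m (list entries).\<close>
definition consec_partition :: "'n::{finite,linorder} set list \<Rightarrow> bool" where
  "consec_partition Is \<longleftrightarrow>
     (\<forall>t<length Is. Is ! t \<noteq> {}) \<and> \<Union>(set Is) = UNIV \<and>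
     (\<forall>s t i1 i2. s < t \<and> t < length Is \<and> i1 \<in> Is ! s \<and> i2 \<in> Is ! t \<longrightarrow> i1 < i2)"

text \<open>R^I: vectors supported on I.\<close>
definition coord_sub :: "'n set \<Rightarrow> (real^'n) set" where
  "coord_sub I = {x. \<forall>i. i \<notin> I \<longrightarrow> x $ i = 0}"

definition U_grp :: "'n::{finite,linorder} set list \<Rightarrow> ((real,'n) vec,'n) vec set" where
  "U_grp Is = {g\<in>SL. \<forall>t<length Is. \<forall>x\<in>coord_sub (Is ! t).
       (mat 1 - g) *v x \<in> coord_sub (\<Union>{Is ! s | s. s < t})}"

text \<open>Determinant of the principal submatrix indexed by B (Leibniz formula).\<close>
definition det_block :: "real^'n^'n \<Rightarrow> 'n set \<Rightarrow> real" where
  "det_block g B = (\<Sum>p\<in>{p. p permutes B}. of_int (sign p) * (\<Prod>i\<in>B. g $ i $ p i))"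

definition K_grp :: "'n::{finite,linorder} set list \<Rightarrow> ((real,'n) vec,'n) vec set" where
  "K_grp Is = {g. (\<forall>i j. g $ i $ j \<noteq> 0 \<longrightarrow> (\<exists>t<length Is. i \<in> Is ! t \<and> j \<in> Is ! t))
      \<and> transpose g ** g = mat 1
      \<and> (\<forall>t<length Is. det_block g (Is ! t) = 1)}"

definition KU_grp :: "'n::{finite,linorder} set list \<Rightarrow> ((real,'n) vec,'n) vec set" where
  "KU_grp Is = {k ** u | k u. k \<in> K_grp Is \<and> u \<in> U_grp Is}"

definition A_plus :: "'n::{finite,linorder} set list \<Rightarrow> ((real,'n) vec,'n) vec set" where
  "A_plus Is = {d. \<exists>x :: 'n \<Rightarrow> real.
      d = (\<chi> i j. if i = j then x i else 0) \<and> (\<forall>i. x i > 0)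
      \<and> (\<forall>t<length Is. (\<Prod>i\<in>Is ! t. x i) = 1)
      \<and> (\<forall>i j. i < j \<and> \<not> (\<exists>k. i < k \<and> k < j) \<and> (\<exists>t<length Is. i \<in> Is ! t \<and> j \<in> Is ! t)
               \<longrightarrow> x j / x i \<ge> 1)}"

definition fixed_vecs :: "(real^'n^'n \<Rightarrow> real^'m^'m) \<Rightarrow> (real^'n^'n) set \<Rightarrow> (real^'m) set" where
  "fixed_vecs \<rho> H = {v. \<forall>h\<in>H. \<rho> h *v v = v}"

end

theory Submission
  imports Defs
begin

definition Dg :: "('n::finite \<Rightarrow> real) \<Rightarrow> real^'n^'n" where
  "Dg h = (\<chi> i j. if i = j then exp (h i) else 0)"

lemma Dg_SL: "sum h UNIV = 0 \<Longrightarrow> Dg h \<in> SL"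
proof -
  assume a: "sum h UNIV = 0"
  have "det (Dg h) = (\<Prod>i\<in>UNIV. Dg h $ i $ i)" by (rule det_diagonal) (simp add: Dg_def)
  also have "\<dots> = exp (sum h UNIV)" by (simp add: Dg_def exp_sum)
  finally show ?thesis using a by (simp add: SL_def)
qed

lemma Dg_zero: "Dg (\<lambda>i. 0) = mat 1"
  by (simp add: Dg_def mat_def vec_eq_iff)

lemma sum_delta_mult: "(\<Sum>c\<in>(UNIV::'n::finite set). (if a = c then x else 0) * f c) = (x * f a :: real)"
proof -
  have "(\<Sum>c\<in>(UNIV::'n set). (if a = c then x else 0) * f c) = (\<Sum>c\<in>UNIV. if a = c then x * f c else 0)"
    by (rule sum.cong) auto
  then show ?thesis by simp
qed

lemma Dg_add: "Dg (\<lambda>i. h i + k i) = Dg h ** Dg k"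
proof -
  have "(Dg h ** Dg k) $ a $ b = (if a = b then exp (h a + k a) else 0)" for a b
    unfolding matrix_matrix_mult_def Dg_def
    by (simp only: vec_lambda_beta sum_delta_mult) (simp add: exp_add)
  then show ?thesis by (simp add: Dg_def vec_eq_iff)
qed


definition sp :: "('n::finite \<Rightarrow> 'n) \<Rightarrow> ('n \<Rightarrow> real) \<Rightarrow> real^'n^'n" where
  "sp \<tau> s = (\<chi> a c. if c = \<tau> a then s a else 0)"

lemma sum_unique_real: "(\<Sum>a\<in>(UNIV::'n::finite set). if a = b then f a else 0) = (f b :: real)"
  by simp

lemma sp_orth:
  assumes "bij \<tau>" "\<And>a. s a * s a = 1"
  shows "transpose (sp \<tau> s) ** sp \<tau> s = mat 1"
proof -
  have "(transpose (sp \<tau> s) ** sp \<tau> s) $ b $ c = (if b = c then 1 else 0)" for b c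
  proof -
    have "(transpose (sp \<tau> s) ** sp \<tau> s) $ b $ c = (\<Sum>a\<in>UNIV. (if b = \<tau> a then s a else 0) * (if c = \<tau> a then s a else 0))"
      unfolding matrix_matrix_mult_def sp_def transpose_def by simp
    also have "\<dots> = (\<Sum>a\<in>UNIV. if a = inv \<tau> b then (if c = \<tau> a then s a * s a else 0) else 0)"
      apply (rule sum.cong, simp)
      using assms(1) by (auto simp: bij_inv_eq_iff)
    also have "\<dots> = (if c = \<tau> (inv \<tau> b) then s (inv \<tau> b) * s (inv \<tau> b) else 0)"
      by (rule sum_unique_real)
    also have "\<dots> = (if b = c then 1 else 0)"
    proof -
      have tb: "\<tau> (inv \<tau> b) = b" using assms(1) by (simp add: bij_is_surj surj_f_inv_f)
      show ?thesis using assms tb by auto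
    qed
    finally show ?thesis .
  qed
  then show ?thesis by (simp add: vec_eq_iff mat_def)
qed

lemma sp_conj:
  assumes "bij \<tau>" "\<And>a. s a * s a = 1"
  shows "sp \<tau> s ** Dg h ** transpose (sp \<tau> s) = Dg (h \<circ> \<tau>)"
proof -
  have 1: "(sp \<tau> s ** Dg h) $ a $ c = (if c = \<tau> a then s a * exp (h c) else 0)" for a c
  proof -
    have "(sp \<tau> s ** Dg h) $ a $ c = (\<Sum>d\<in>UNIV. (if d = \<tau> a then s a else 0) * (if d = c then exp (h d) else 0))"
      unfolding matrix_matrix_mult_def sp_def Dg_def by simp
    also have "\<dots> = (\<Sum>d\<in>UNIV. if d = \<tau> a then s a * (if d = c then exp (h d) else 0) else 0)"
      by (rule sum.cong) auto
    also have "\<dots> = (if c = \<tau> a then s a * exp (h c) else 0)"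
      by (simp only: sum_unique_real) auto
    finally show ?thesis .
  qed
  have "(sp \<tau> s ** Dg h ** transpose (sp \<tau> s)) $ a $ b = (if a = b then exp (h (\<tau> a)) else 0)" for a b
  proof -
    have "(sp \<tau> s ** Dg h ** transpose (sp \<tau> s)) $ a $ b =
       (\<Sum>c\<in>UNIV. (if c = \<tau> a then s a * exp (h c) else 0) * (if c = \<tau> b then s b else 0))"
    proof -
      have t: "transpose (sp \<tau> s) $ c $ b = (if c = \<tau> b then s b else 0)" for c
        by (simp add: transpose_def sp_def)
      show ?thesis unfolding matrix_matrix_mult_def[of "sp \<tau> s ** Dg h"] 
        by (simp only: vec_lambda_beta 1 t)
    qed
    also have "\<dots> = (\<Sum>c\<in>UNIV. if c = \<tau> a then s a * exp (h c) * (if c = \<tau> b then s b else 0) else 0)"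
      by (rule sum.cong) auto
    also have "\<dots> = s a * exp (h (\<tau> a)) * (if \<tau> a = \<tau> b then s b else 0)"
      by (simp only: sum_unique_real)
    also have "\<dots> = (if a = b then exp (h (\<tau> a)) else 0)"
      using assms bij_is_inj[OF assms(1)] by (auto simp: inj_eq)
    finally show ?thesis .
  qed
  then show ?thesis by (simp add: vec_eq_iff Dg_def)
qed


lemma det_block_mono:
  assumes "\<sigma> permutes B" "\<forall>a\<in>B. \<forall>c. g$a$c \<noteq> 0 \<longrightarrow> c = \<sigma> a"
  shows "det_block g B = of_int (sign \<sigma>) * (\<Prod>a\<in>B. g$a$(\<sigma> a))"
proof -
  let ?f = "\<lambda>p. of_int (sign p) * (\<Prod>i\<in>B. g $ i $ p i)"
  have fin: "finite {p. p permutes B}" by (rule finite_permutations) simp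
  have mem: "\<sigma> \<in> {p. p permutes B}" using assms(1) by simp
  have z: "?f p = 0" if "p \<in> {p. p permutes B} - {\<sigma>}" for p
  proof -
    from that have pp: "p permutes B" "p \<noteq> \<sigma>" by auto
    have "\<exists>a\<in>B. p a \<noteq> \<sigma> a"
    proof (rule ccontr)
      assume "\<not> ?thesis"
      then have "p x = \<sigma> x" for x
        using pp(1) assms(1) by (cases "x \<in> B") (auto simp: permutes_def)
      then show False using pp(2) by auto
    qed
    then obtain a where "a \<in> B" "p a \<noteq> \<sigma> a" by blast
    then have "g $ a $ p a = 0" using assms(2) by blast
    then have "(\<Prod>i\<in>B. g $ i $ p i) = 0"
      using \<open>a \<in> B\<close> by (intro prod_zero) auto
    then show ?thesis by simp
  qed
  have "det_block g B = ?f \<sigma> + sum ?f ({p. p permutes B} - {\<sigma>})"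
    unfolding det_block_def using sum.remove[OF fin mem, of ?f] by simp
  also have "sum ?f ({p. p permutes B} - {\<sigma>}) = 0"
    using z by (intro sum.neutral) blast
  finally show ?thesis by simp
qed

lemma det_eq_det_block: "det g = det_block g UNIV"
  unfolding det_def det_block_def by simp

lemma cp_disj:
  assumes "consec_partition Is" "s < length Is" "t < length Is" "i \<in> Is ! s" "i \<in> Is ! t"
  shows "s = t"
  using assms unfolding consec_partition_def
  by (metis less_irrefl nat_neq_iff)

lemma cp_cover:
  assumes "consec_partition Is"
  shows "\<exists>t<length Is. i \<in> Is ! t"
proof -
  have "i \<in> \<Union>(set Is)" using assms unfolding consec_partition_def by auto
  then show ?thesis by (metis UnionE in_set_conv_nth)
qed

definition sb :: "'n set list \<Rightarrow> 'n \<Rightarrow> 'n \<Rightarrow> bool" where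
  "sb Is i j \<longleftrightarrow> (\<exists>t<length Is. i \<in> Is ! t \<and> j \<in> Is ! t)"

definition Rm :: "'n::finite \<Rightarrow> 'n \<Rightarrow> real^'n^'n" where
  "Rm i j = sp (Transposition.transpose i j) (\<lambda>a. if a = j then -1 else 1)"

lemma Rm_transpose: "i \<noteq> j \<Longrightarrow> transpose (Rm i j) = Rm j i"
  unfolding Rm_def sp_def transpose_def
  by (simp add: vec_eq_iff Transposition.transpose_def) 

lemma Rm_det_block:
  assumes "i \<noteq> j" "i \<in> B" "j \<in> B"
  shows "det_block (Rm i j) B = 1"
proof -
  have "det_block (Rm i j) B = of_int (sign (Transposition.transpose i j)) * (\<Prod>a\<in>B. Rm i j $ a $ (Transposition.transpose i j a))"
    by (rule det_block_mono) (auto simp: assms permutes_swap_id Rm_def sp_def)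
  also have "(\<Prod>a\<in>B. Rm i j $ a $ (Transposition.transpose i j a)) = (\<Prod>a\<in>B. if a = j then -1 else 1)"
    by (rule prod.cong) (auto simp: Rm_def sp_def)
  also have "\<dots> = -1"
    using assms by (simp add: prod.If_cases Int_absorb1 )
  finally show ?thesis using assms by (simp add: sign_swap_id)
qed

lemma Rm_det_block_id:
  assumes "i \<notin> B" "j \<notin> B"
  shows "det_block (Rm i j) B = 1"
proof -
  have "det_block (Rm i j) B = of_int (sign (id::'a\<Rightarrow>'a)) * (\<Prod>a\<in>B. Rm i j $ a $ (id a))"
    by (rule det_block_mono) (use assms in \<open>auto simp: permutes_id Rm_def sp_def Transposition.transpose_def\<close>)
  also have "(\<Prod>a\<in>B. Rm i j $ a $ (id a)) = (\<Prod>a\<in>B. 1)"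
    by (rule prod.cong) (use assms in \<open>auto simp: Rm_def sp_def Transposition.transpose_def\<close>)
  finally show ?thesis by (simp add: sign_id)
qed

lemma Rm_SL: "i \<noteq> j \<Longrightarrow> Rm i j \<in> SL"
  using Rm_det_block[of i j UNIV] by (simp add: SL_def det_eq_det_block)

lemma Rm_K:
  assumes cp: "consec_partition Is" and "i \<noteq> j" and sbij: "sb Is i j"
  shows "Rm i j \<in> K_grp Is"
proof -
  obtain t0 where t0: "t0 < length Is" "i \<in> Is ! t0" "j \<in> Is ! t0" using sbij by (auto simp: sb_def)
  have bij: "bij (Transposition.transpose i j)" by simp
  have sq: "\<And>a. (if a = j then -1 else 1) * (if a = j then -1 else (1::real)) = 1" by simp
  have 1: "\<exists>t<length Is. a \<in> Is ! t \<and> c \<in> Is ! t" if "Rm i j $ a $ c \<noteq> 0" for a c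
  proof -
    have c: "c = Transposition.transpose i j a" using that by (auto simp: Rm_def sp_def split: if_splits)
    show ?thesis
    proof (cases "a = i \<or> a = j")
      case True then show ?thesis using t0 c by auto
    next
      case False
      then have "c = a" using c by (auto simp: Transposition.transpose_def)
      then show ?thesis using cp_cover[OF cp, of a] by auto
    qed
  qed
  have 2: "transpose (Rm i j) ** Rm i j = mat 1"
    unfolding Rm_def by (rule sp_orth[OF bij sq])
  have 3: "det_block (Rm i j) (Is ! t) = 1" if "t < length Is" for t
  proof (cases "i \<in> Is ! t")
    case True
    then have "t = t0" using cp_disj[OF cp that t0(1) _ t0(2)] by simp
    then show ?thesis using Rm_det_block[OF assms(2)] t0 by simp
  next
    case False
    have "j \<notin> Is ! t"
    proof
      assume "j \<in> Is ! t"
      then have "t = t0" using cp_disj[OF cp that t0(1) _ t0(3)] by simp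
      then show False using False t0 by simp
    qed
    then show ?thesis using Rm_det_block_id[OF False] by blast
  qed
  show ?thesis unfolding K_grp_def using 1 2 3 by blast
qed

lemma K_sub_KU: "K_grp Is \<subseteq> KU_grp Is"
proof
  fix k assume k: "k \<in> K_grp Is"
  have "mat 1 \<in> U_grp Is"
    unfolding U_grp_def SL_def coord_sub_def by simp
  moreover have "k = k ** mat 1" by simp
  ultimately show "k \<in> KU_grp Is" using k unfolding KU_grp_def by blast
qed


lemma rat_rep_mult: "rat_rep \<rho> \<Longrightarrow> g \<in> SL \<Longrightarrow> h \<in> SL \<Longrightarrow> \<rho> (g ** h) = \<rho> g ** \<rho> h"
  unfolding rat_rep_def by blast

lemma SL_mult: "g \<in> SL \<Longrightarrow> h \<in> SL \<Longrightarrow> g ** h \<in> SL"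
  unfolding SL_def by (simp add: det_mul)

lemma fixedD: "v \<in> fixed_vecs \<rho> (KU_grp Is) \<Longrightarrow> k \<in> K_grp Is \<Longrightarrow> \<rho> k *v v = v"
  using K_sub_KU unfolding fixed_vecs_def by blast

lemma sb_sym: "sb Is i j \<Longrightarrow> sb Is j i" unfolding sb_def by blast

lemma swap_good:
  assumes rr: "rat_rep \<rho>" and cp: "consec_partition Is" and ij: "i \<noteq> j" "sb Is i j"
    and h: "sum h UNIV = 0" and v: "v \<in> fixed_vecs \<rho> (KU_grp Is)"
  shows "\<rho> (Dg (h \<circ> Transposition.transpose i j)) *v v = \<rho> (Rm i j) *v (\<rho> (Dg h) *v v)"
proof -
  have sq: "\<And>a. (if a = j then -1 else 1) * (if a = j then -1 else (1::real)) = 1" by simp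
  have e: "Dg (h \<circ> Transposition.transpose i j) = Rm i j ** Dg h ** Rm j i"
    using sp_conj[where \<tau>="Transposition.transpose i j" and h=h and s="\<lambda>a. if a = j then -1 else 1", OF _ sq] Rm_transpose[OF ij(1)]
    unfolding Rm_def by simp
  have s1: "Rm i j \<in> SL" "Rm j i \<in> SL" "Dg h \<in> SL"
    using Rm_SL[of i j] Rm_SL[of j i] ij Dg_SL h by auto
  have "\<rho> (Dg (h \<circ> Transposition.transpose i j)) = \<rho> (Rm i j) ** \<rho> (Dg h) ** \<rho> (Rm j i)"
    unfolding e using s1 rr by (simp add: rat_rep_mult SL_mult)
  moreover have "\<rho> (Rm j i) *v v = v"
    using fixedD[OF v Rm_K[OF cp _ sb_sym[OF ij(2)]]] ij by auto
  ultimately show ?thesis by (simp add: matrix_vector_mul_assoc[symmetric])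
qed

definition good :: "(((real,'n::{finite,linorder}) vec,'n) vec \<Rightarrow> real^'m^'m) \<Rightarrow> 'n set list \<Rightarrow> ('n \<Rightarrow> 'n) \<Rightarrow> bool" where
  "good \<rho> Is \<sigma> \<longleftrightarrow> (\<exists>M. \<forall>h v. sum h UNIV = 0 \<longrightarrow> v \<in> fixed_vecs \<rho> (KU_grp Is) \<longrightarrow>
      \<rho> (Dg (h \<circ> \<sigma>)) *v v = M *v (\<rho> (Dg h) *v v))"

definition Gp :: "'n::{finite,linorder} set list \<Rightarrow> ('n \<Rightarrow> 'n) set" where
  "Gp Is = {\<sigma>. \<sigma> permutes UNIV \<and> (\<forall>i. sb Is i (\<sigma> i))}"

lemma good_id: "good \<rho> Is id"
  unfolding good_def by (rule exI[of _ "mat 1"]) simp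

lemma good_swap_comp:
  fixes Is :: "'n::{finite,linorder} set list"
  assumes rr: "rat_rep \<rho>" and cp: "consec_partition Is" and ij: "i \<noteq> j" "sb Is i j"
    and g: "good \<rho> Is \<tau>"
  shows "good \<rho> Is (Transposition.transpose i j \<circ> \<tau>)"
proof -
  obtain M where M: "\<And>h v. sum h UNIV = 0 \<Longrightarrow> v \<in> fixed_vecs \<rho> (KU_grp Is) \<Longrightarrow>
      \<rho> (Dg (h \<circ> \<tau>)) *v v = M *v (\<rho> (Dg h) *v v)" using g unfolding good_def by blast
  show ?thesis unfolding good_def
  proof (intro exI[of _ "M ** \<rho> (Rm i j)"] allI impI)
    fix h :: "'n \<Rightarrow> real" and v assume h: "sum h UNIV = 0" and v: "v \<in> fixed_vecs \<rho> (KU_grp Is)"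
    have h2: "sum (h \<circ> Transposition.transpose i j) UNIV = 0"
      using h sum.permute[where g=h, OF permutes_swap_id[of i UNIV j]] by simp
    have "\<rho> (Dg (h \<circ> (Transposition.transpose i j \<circ> \<tau>))) *v v = \<rho> (Dg ((h \<circ> Transposition.transpose i j) \<circ> \<tau>)) *v v"
      by (simp add: comp_assoc)
    also have "\<dots> = M *v (\<rho> (Dg (h \<circ> Transposition.transpose i j)) *v v)" using M[OF h2 v] .
    also have "\<dots> = M *v (\<rho> (Rm i j) *v (\<rho> (Dg h) *v v))" using swap_good[OF rr cp ij h v] by simp
    finally show "\<rho> (Dg (h \<circ> (Transposition.transpose i j \<circ> \<tau>))) *v v = (M ** \<rho> (Rm i j)) *v (\<rho> (Dg h) *v v)"
      by (simp add: matrix_vector_mul_assoc matrix_mul_assoc)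
  qed
qed

lemma Gp_good_aux:
  assumes rr: "rat_rep \<rho>" and cp: "consec_partition Is"
  shows "card {i. \<sigma> i \<noteq> i} = n \<Longrightarrow> \<sigma> \<in> Gp Is \<Longrightarrow> good \<rho> Is \<sigma>"
proof (induction n arbitrary: \<sigma> rule: less_induct)
  case (less n)
  show ?case
  proof (cases "\<sigma> = id")
    case True then show ?thesis using good_id by metis
  next
    case False
    then obtain i where i: "\<sigma> i \<noteq> i" by (metis eq_id_iff)
    let ?t = "Transposition.transpose i (\<sigma> i)"
    define \<tau> where "\<tau> = ?t \<circ> \<sigma>"
    have sp: "\<sigma> permutes UNIV" "\<And>k. sb Is k (\<sigma> k)" using less.prems(2) by (auto simp: Gp_def)
    have sbi: "sb Is i (\<sigma> i)" using sp by simp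
    have tG: "\<tau> \<in> Gp Is"
      unfolding Gp_def
    proof (intro CollectI conjI allI)
      show "\<tau> permutes UNIV" unfolding \<tau>_def by (rule permutes_compose[OF sp(1)]) (simp add: permutes_swap_id)
      fix k
      have s1: "sb Is k (\<sigma> k)" by (rule sp(2))
      show "sb Is k (\<tau> k)"
      proof (cases "\<sigma> k = i \<or> \<sigma> k = \<sigma> i")
        case True
        have "\<tau> k \<in> {i, \<sigma> i}" using True by (auto simp: \<tau>_def)
        moreover have "sb Is k i" "sb Is k (\<sigma> i)"
        proof -
          obtain t where t: "t < length Is" "k \<in> Is ! t" "\<sigma> k \<in> Is ! t" using s1 by (auto simp: sb_def)
          obtain t' where t': "t' < length Is" "i \<in> Is ! t'" "\<sigma> i \<in> Is ! t'" using sbi by (auto simp: sb_def)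
          have "t = t'" using True t t' cp_disj[OF cp t(1) t'(1)] by auto
          then show "sb Is k i" "sb Is k (\<sigma> i)" using t t' by (auto simp: sb_def)
        qed
        ultimately show ?thesis by auto
      next
        case False
        then have "\<tau> k = \<sigma> k" by (auto simp: \<tau>_def Transposition.transpose_def)
        then show ?thesis using s1 by simp
      qed
    qed
    have sub: "{k. \<tau> k \<noteq> k} \<subseteq> {k. \<sigma> k \<noteq> k} - {i}"
    proof
      fix k assume k: "k \<in> {k. \<tau> k \<noteq> k}"
      have inj: "inj \<sigma>" using sp(1) permutes_inj by blast
      show "k \<in> {k. \<sigma> k \<noteq> k} - {i}"
      proof -
        have "k \<noteq> i" using k by (auto simp: \<tau>_def)
        moreover have "\<sigma> k \<noteq> k"
        proof
          assume sk: "\<sigma> k = k"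
          have "k \<noteq> \<sigma> i" using sk inj i by (metis injD)
          then have "\<tau> k = k" using sk \<open>k \<noteq> i\<close> by (auto simp: \<tau>_def Transposition.transpose_def)
          then show False using k by simp
        qed
        ultimately show ?thesis by simp
      qed
    qed
    have "card {k. \<tau> k \<noteq> k} < n"
    proof -
      have "card {k. \<tau> k \<noteq> k} \<le> card ({k. \<sigma> k \<noteq> k} - {i})" by (rule card_mono[OF _ sub]) simp
      also have "\<dots> < card {k. \<sigma> k \<noteq> k}" using i by (intro card_Diff1_less) auto
      finally show ?thesis using less.prems(1) by simp
    qed
    then have gt: "good \<rho> Is \<tau>" using less.IH tG by blast
    have "\<sigma> = ?t \<circ> \<tau>" unfolding \<tau>_def by (simp add: comp_assoc[symmetric] Transposition.transpose_comp_involutory)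
    then show ?thesis using good_swap_comp[OF rr cp i[symmetric] sbi gt] by simp
  qed
qed

lemma Gp_good: "rat_rep \<rho> \<Longrightarrow> consec_partition Is \<Longrightarrow> \<sigma> \<in> Gp Is \<Longrightarrow> good \<rho> Is \<sigma>"
  using Gp_good_aux by blast


lemma sb_trans: "consec_partition Is \<Longrightarrow> sb Is a b \<Longrightarrow> sb Is b c \<Longrightarrow> sb Is a c"
  unfolding sb_def by (metis cp_disj)

lemma sb_refl: "consec_partition Is \<Longrightarrow> sb Is a a"
  unfolding sb_def using cp_cover by blast

lemma Gp_finite: "finite (Gp Is)"
proof -
  have "Gp Is \<subseteq> {p. p permutes (UNIV::'a set)}" by (auto simp: Gp_def)
  moreover have "finite {p. p permutes (UNIV::'a set)}" by (rule finite_permutations) simp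
  ultimately show ?thesis by (rule finite_subset)
qed

lemma Gp_id: "consec_partition Is \<Longrightarrow> id \<in> Gp Is"
  unfolding Gp_def using sb_refl permutes_id by auto

lemma Gp_block:
  assumes cp: "consec_partition Is" and s: "\<sigma> \<in> Gp Is" and t: "t < length Is"
  shows "\<sigma> ` (Is ! t) = Is ! t"
proof -
  have sp: "\<sigma> permutes UNIV" "\<And>k. sb Is k (\<sigma> k)" using s by (auto simp: Gp_def)
  have inj: "inj \<sigma>" using sp(1) permutes_inj by blast
  have sub: "\<sigma> ` (Is ! t) \<subseteq> Is ! t"
  proof
    fix y assume "y \<in> \<sigma> ` (Is ! t)"
    then obtain i where i: "i \<in> Is ! t" "y = \<sigma> i" by auto
    obtain t' where t': "t' < length Is" "i \<in> Is ! t'" "\<sigma> i \<in> Is ! t'" using sp(2)[of i] by (auto simp: sb_def)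
    have "t' = t" using cp_disj[OF cp t'(1) t] t'(2) i(1) by simp
    then show "y \<in> Is ! t" using t' i by simp
  qed
  have "card (\<sigma> ` (Is ! t)) = card (Is ! t)" using inj by (simp add: card_image inj_on_subset)
  then show ?thesis using sub by (intro card_subset_eq) auto
qed

lemma Gp_sum_block:
  assumes cp: "consec_partition Is" and s: "\<sigma> \<in> Gp Is" and t: "t < length Is"
  shows "(\<Sum>i\<in>Is ! t. h (\<sigma> i)) = sum h (Is ! t)"
proof -
  have inj: "inj_on \<sigma> (Is ! t)" using s permutes_inj by (auto simp: Gp_def intro: inj_on_subset)
  have "sum h (\<sigma> ` (Is ! t)) = (\<Sum>i\<in>Is ! t. h (\<sigma> i))" using sum.reindex[OF inj, of h] by simp
  then show ?thesis using Gp_block[OF assms] by simp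
qed

lemma Gp_X_eq:
  assumes cp: "consec_partition Is" and sb: "sb Is i i'"
  shows "(\<Sum>\<sigma>\<in>Gp Is. h (\<sigma> i)) = (\<Sum>\<sigma>\<in>Gp Is. h (\<sigma> i'))"
proof -
  let ?t = "Transposition.transpose i i'"
  have cl: "\<sigma> \<circ> ?t \<in> Gp Is" if "\<sigma> \<in> Gp Is" for \<sigma>
  proof -
    have sp: "\<sigma> permutes UNIV" "\<And>k. sb Is k (\<sigma> k)" using that by (auto simp: Gp_def)
    have "sb Is k (\<sigma> (?t k))" for k
    proof (cases "k = i \<or> k = i'")
      case True
      then have "sb Is k (?t k)" using sb sb_sym sb_refl[OF cp] by (auto simp: Transposition.transpose_def)
      then show ?thesis using sp(2) sb_trans[OF cp] by blast
    next
      case False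
      then show ?thesis using sp(2) by (simp add: Transposition.transpose_def)
    qed
    moreover have "\<sigma> \<circ> ?t permutes UNIV" by (rule permutes_compose[OF _ sp(1)]) (simp add: permutes_swap_id)
    ultimately show ?thesis by (simp add: Gp_def)
  qed
  have "(\<Sum>\<sigma>\<in>Gp Is. h (\<sigma> i)) = (\<Sum>\<sigma>\<in>Gp Is. h ((\<sigma> \<circ> ?t) i'))"
    by (rule sum.cong) (auto simp: Transposition.transpose_def)
  also have "\<dots> = (\<Sum>\<sigma>\<in>Gp Is. h (\<sigma> i'))"
    by (rule sum.reindex_bij_witness[where i="\<lambda>\<sigma>. \<sigma> \<circ> ?t" and j="\<lambda>\<sigma>. \<sigma> \<circ> ?t"])
       (auto simp: cl comp_assoc Transposition.transpose_comp_involutory)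
  finally show ?thesis .
qed

lemma Gp_X_zero:
  fixes h :: "'n::{finite,linorder} \<Rightarrow> real"
  assumes cp: "consec_partition Is" and hb: "\<forall>t<length Is. sum h (Is ! t) = 0"
  shows "(\<Sum>\<sigma>\<in>Gp Is. h (\<sigma> i)) = 0"
proof -
  obtain t where t: "t < length Is" "i \<in> Is ! t" using cp_cover[OF cp] by blast
  let ?X = "\<lambda>i. \<Sum>\<sigma>\<in>Gp Is. h (\<sigma> i)"
  have eq: "?X i' = ?X i" if "i' \<in> Is ! t" for i'
    using Gp_X_eq[OF cp, of i' i] that t by (auto simp: sb_def)
  have "(\<Sum>i'\<in>Is ! t. ?X i') = (\<Sum>\<sigma>\<in>Gp Is. \<Sum>i'\<in>Is ! t. h (\<sigma> i'))"
    by (rule sum.swap)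
  also have "\<dots> = (\<Sum>\<sigma>\<in>Gp Is. 0)"
  proof (rule sum.cong)
    fix \<sigma> assume "\<sigma> \<in> Gp Is"
    then show "(\<Sum>i'\<in>Is ! t. h (\<sigma> i')) = 0" using Gp_sum_block[OF cp _ t(1), of \<sigma> h] hb t(1) by simp
  qed simp
  finally have "(\<Sum>i'\<in>Is ! t. ?X i') = 0" by simp
  moreover have "(\<Sum>i'\<in>Is ! t. ?X i') = real (card (Is ! t)) * ?X i"
    using eq by simp
  moreover have "card (Is ! t) > 0" using t by (auto simp: card_gt_0_iff)
  ultimately show ?thesis using t(2) by auto
qed

lemma avg_exists:
  assumes cp: "consec_partition Is" and hb: "\<forall>t<length Is. sum h (Is ! t) = 0"
  shows "\<exists>\<sigma>\<in>Gp Is. (\<Sum>i\<in>UNIV. w i * h (\<sigma> i)) \<ge> (0::real)"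
proof (rule ccontr)
  assume "\<not> ?thesis"
  then have neg: "\<forall>\<sigma>\<in>Gp Is. (\<Sum>i\<in>UNIV. w i * h (\<sigma> i)) < 0" by auto
  have "(\<Sum>\<sigma>\<in>Gp Is. \<Sum>i\<in>UNIV. w i * h (\<sigma> i)) < (\<Sum>\<sigma>\<in>Gp Is. 0)"
    using neg Gp_finite Gp_id[OF cp] by (intro sum_strict_mono) auto
  moreover have "(\<Sum>\<sigma>\<in>Gp Is. \<Sum>i\<in>UNIV. w i * h (\<sigma> i)) = (\<Sum>i\<in>UNIV. w i * (\<Sum>\<sigma>\<in>Gp Is. h (\<sigma> i)))"
    by (simp add: sum.swap[of _ "Gp Is"] sum_distrib_left)
  moreover have "\<dots> = 0" using Gp_X_zero[OF cp hb] by simp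
  ultimately show False by simp
qed


lemma exp_neg_lim: "(a::real) < 0 \<Longrightarrow> ((\<lambda>t. c * exp (t * a)) \<longlongrightarrow> 0) at_top"
proof -
  assume a: "a < 0"
  have "filterlim (\<lambda>t. a * t) at_bot at_top"
    by (rule filterlim_tendsto_neg_mult_at_bot[OF tendsto_const a filterlim_ident])
  then have "((\<lambda>t. exp (a * t)) \<longlongrightarrow> 0) at_top"
    by (rule filterlim_compose[OF exp_at_bot])
  then have "((\<lambda>t. c * exp (a * t)) \<longlongrightarrow> c * 0) at_top"
    by (intro tendsto_mult tendsto_const)
  then show ?thesis by (simp add: mult.commute)
qed

lemma exp_indep_aux:
  "finite I \<Longrightarrow> card I = n \<Longrightarrow> inj_on \<mu> I \<Longrightarrow> (\<forall>t. (\<Sum>i\<in>I. c i * exp (t * \<mu> i)) = (0::real)) \<Longrightarrow> \<forall>i\<in>I. c i = 0"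
proof (induction n arbitrary: I rule: less_induct)
  case (less n)
  show ?case
  proof (cases "I = {}")
    case True then show ?thesis by simp
  next
    case False
    obtain m where m: "m \<in> I" "\<mu> m = Max (\<mu> ` I)"
    proof -
      have "Max (\<mu> ` I) \<in> \<mu> ` I" using less.prems(1) False by (intro Max_in) auto
      then show ?thesis using that by (metis imageE)
    qed
    have lt: "\<mu> i < \<mu> m" if "i \<in> I - {m}" for i
    proof -
      have "\<mu> i \<le> \<mu> m" using m that less.prems(1) by simp
      moreover have "\<mu> i \<noteq> \<mu> m" using less.prems(3) m(1) that by (auto dest: inj_onD)
      ultimately show ?thesis by simp
    qed
    have fin: "finite (I - {m})" using less.prems(1) by simp
    have eq: "c m + (\<Sum>i\<in>I - {m}. c i * exp (t * (\<mu> i - \<mu> m))) = 0" for t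
    proof -
      have "(\<Sum>i\<in>I. c i * exp (t * \<mu> i)) = c m * exp (t * \<mu> m) + (\<Sum>i\<in>I - {m}. c i * exp (t * \<mu> i))"
        using sum.remove[OF less.prems(1) m(1)] by simp
      also have "(\<Sum>i\<in>I - {m}. c i * exp (t * \<mu> i)) = exp (t * \<mu> m) * (\<Sum>i\<in>I - {m}. c i * exp (t * (\<mu> i - \<mu> m)))"
        by (simp add: sum_distrib_left right_diff_distrib exp_diff)
      finally have "exp (t * \<mu> m) * (c m + (\<Sum>i\<in>I - {m}. c i * exp (t * (\<mu> i - \<mu> m)))) = 0"
        using less.prems(4) by (simp add: algebra_simps)
      then show ?thesis by simp
    qed
    have lim: "((\<lambda>t. \<Sum>i\<in>I - {m}. c i * exp (t * (\<mu> i - \<mu> m))) \<longlongrightarrow> 0) at_top"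
      using lt by (intro tendsto_null_sum exp_neg_lim) auto
    have "((\<lambda>t::real. - c m) \<longlongrightarrow> 0) at_top"
    proof -
      have e2: "(\<lambda>t. \<Sum>i\<in>I - {m}. c i * exp (t * (\<mu> i - \<mu> m))) = (\<lambda>t. - c m)"
        using eq by (auto simp: eq_neg_iff_add_eq_0 add.commute)
      show ?thesis using lim unfolding e2 .
    qed
    then have cm: "c m = 0" using tendsto_const[of "- c m" "at_top::real filter"] tendsto_unique[OF trivial_limit_at_top_linorder] by fastforce
    have rest: "\<forall>i\<in>I - {m}. c i = 0"
    proof (rule less.IH[of "card (I - {m})"])
      show "card (I - {m}) < n" using less.prems(1,2) m(1) by (metis card_Diff1_less)
      show "inj_on \<mu> (I - {m})" using less.prems(3) by (rule inj_on_subset) auto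
      show "\<forall>t. (\<Sum>i\<in>I - {m}. c i * exp (t * \<mu> i)) = 0"
      proof
        fix t
        have "(\<Sum>i\<in>I. c i * exp (t * \<mu> i)) = c m * exp (t * \<mu> m) + (\<Sum>i\<in>I - {m}. c i * exp (t * \<mu> i))"
          using sum.remove[OF less.prems(1) m(1)] by simp
        then show "(\<Sum>i\<in>I - {m}. c i * exp (t * \<mu> i)) = 0" using less.prems(4) cm by simp
      qed
    qed (use fin in auto)
    show ?thesis using cm rest by blast
  qed
qed

lemma exp_indep:
  "finite I \<Longrightarrow> inj_on \<mu> I \<Longrightarrow> (\<And>t. (\<Sum>i\<in>I. c i * exp (t * \<mu> i)) = (0::real)) \<Longrightarrow> i \<in> I \<Longrightarrow> c i = 0"
  using exp_indep_aux by blast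


definition Lw :: "('n::finite \<Rightarrow> real) \<Rightarrow> ('n \<Rightarrow> real) \<Rightarrow> real" where
  "Lw w h = (if sum h UNIV = 0 then (\<Sum>i\<in>UNIV. w i * h i) else 0)"

definition linT :: "(('n::finite \<Rightarrow> real) \<Rightarrow> real) \<Rightarrow> bool" where
  "linT \<phi> \<longleftrightarrow> (\<forall>h g s. sum h UNIV = 0 \<longrightarrow> sum g UNIV = 0 \<longrightarrow> \<phi> (\<lambda>i. h i + s * g i) = \<phi> h + s * \<phi> g)"

lemma sumT_lin: "sum h UNIV = 0 \<Longrightarrow> sum g UNIV = 0 \<Longrightarrow> sum (\<lambda>i. h i + s * g i) UNIV = (0::real)"
  by (simp add: sum.distrib sum_distrib_left[symmetric])

lemma Lw_linT: "linT (\<lambda>h. Lw w h - Lw w' h)"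
  unfolding linT_def
proof (intro allI impI)
  fix h g :: "'a \<Rightarrow> real" and s :: real
  assume h: "sum h UNIV = 0" and g: "sum g UNIV = 0"
  have hg: "sum (\<lambda>i. h i + s * g i) UNIV = 0" by (rule sumT_lin[OF h g])
  have e: "(\<Sum>i\<in>UNIV. v i * (h i + s * g i)) = (\<Sum>i\<in>UNIV. v i * h i) + s * (\<Sum>i\<in>UNIV. v i * g i)" for v :: "'a \<Rightarrow> real"
    by (simp add: sum.distrib sum_distrib_left algebra_simps)
  show "Lw w (\<lambda>i. h i + s * g i) - Lw w' (\<lambda>i. h i + s * g i) = Lw w h - Lw w' h + s * (Lw w g - Lw w' g)"
    unfolding Lw_def using h g hg e[of w] e[of w'] by (simp add: algebra_simps)
qed

lemma sep_point:
  assumes "finite P" "\<forall>\<phi>\<in>P. linT \<phi> \<and> (\<exists>h. sum h UNIV = 0 \<and> \<phi> h \<noteq> 0)"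
  shows "\<exists>h::'n::finite\<Rightarrow>real. sum h UNIV = 0 \<and> (\<forall>\<phi>\<in>P. \<phi> h \<noteq> 0)"
  using assms
proof (induction P rule: finite_induct)
  case empty
  show ?case by (rule exI[of _ "\<lambda>i. 0"]) simp
next
  case (insert \<phi> F)
  obtain h1 where h1: "sum h1 UNIV = 0" "\<forall>\<psi>\<in>F. \<psi> h1 \<noteq> 0" using insert by auto
  obtain g where g: "sum g UNIV = 0" "\<phi> g \<noteq> 0" using insert.prems by auto
  let ?Bad = "(\<lambda>\<psi>. - \<psi> h1 / \<psi> g) ` (insert \<phi> F)"
  have "finite ?Bad" using insert.hyps by simp
  then obtain s where s: "s \<notin> ?Bad" using ex_new_if_finite[OF infinite_UNIV_char_0] by blast
  show ?case
  proof (intro exI conjI ballI)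
    show "sum (\<lambda>i. h1 i + s * g i) UNIV = 0" by (rule sumT_lin[OF h1(1) g(1)])
    fix \<psi> assume \<psi>: "\<psi> \<in> insert \<phi> F"
    have lin: "\<psi> (\<lambda>i. h1 i + s * g i) = \<psi> h1 + s * \<psi> g"
      using insert.prems \<psi> h1(1) g(1) unfolding linT_def by blast
    show "\<psi> (\<lambda>i. h1 i + s * g i) \<noteq> 0"
    proof
      assume z: "\<psi> (\<lambda>i. h1 i + s * g i) = 0"
      show False
      proof (cases "\<psi> g = 0")
        case True
        then have "\<psi> h1 = 0" using z lin by simp
        then have "\<psi> = \<phi>" using h1(2) \<psi> by auto
        then show False using True g by simp
      next
        case False
        then have "s = - \<psi> h1 / \<psi> g" using z lin by (simp add: field_simps) 
        then show False using s \<psi> by auto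
      qed
    qed
  qed
qed

lemma Lw_scale: 
  assumes h: "sum h UNIV = 0" shows "Lw w (\<lambda>i. t * h i) = t * Lw w h"
proof -
  have s: "sum (\<lambda>i. t * h i) UNIV = 0" using h by (simp add: sum_distrib_left[symmetric])
  have e: "(\<Sum>i\<in>UNIV. w i * (t * h i)) = t * (\<Sum>i\<in>UNIV. w i * h i)"
    by (simp add: sum_distrib_left mult.left_commute)
  show ?thesis using s h e by (simp add: Lw_def)
qed

lemma indep_L:
  fixes E :: "(('n::finite \<Rightarrow> real) \<Rightarrow> real) set"
  assumes fin: "finite E" and EL: "\<forall>L\<in>E. \<exists>w. L = Lw w"
    and z: "\<And>h. sum h UNIV = 0 \<Longrightarrow> (\<Sum>L\<in>E. c L * exp (L h)) = 0"
    and L: "L \<in> E"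
  shows "c L = 0"
proof -
  let ?P = "(\<lambda>(L, L'). \<lambda>h. L h - L' h) ` {(L, L'). L \<in> E \<and> L' \<in> E \<and> L \<noteq> L'}"
  have finP: "finite ?P" using fin by (intro finite_imageI) (auto intro: finite_subset[of _ "E \<times> E"])
  have P: "\<forall>\<phi>\<in>?P. linT \<phi> \<and> (\<exists>h. sum h UNIV = 0 \<and> \<phi> h \<noteq> 0)"
  proof
    fix \<phi> assume "\<phi> \<in> ?P"
    then obtain L1 L2 where l: "L1 \<in> E" "L2 \<in> E" "L1 \<noteq> L2" "\<phi> = (\<lambda>h. L1 h - L2 h)" by auto
    obtain w1 w2 where w: "L1 = Lw w1" "L2 = Lw w2" using EL l by blast
    have "linT \<phi>" using l(4) w Lw_linT by simp
    moreover obtain h where h: "L1 h \<noteq> L2 h" using l(3) by auto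
    moreover have "sum h UNIV = 0" using h w by (auto simp: Lw_def split: if_splits)
    ultimately show "linT \<phi> \<and> (\<exists>h. sum h UNIV = 0 \<and> \<phi> h \<noteq> 0)" using l(4) by auto
  qed
  obtain h0 :: "'n \<Rightarrow> real" where h0: "sum h0 UNIV = 0" "\<forall>\<phi>\<in>?P. \<phi> h0 \<noteq> 0"
    using sep_point[OF finP P] by blast
  have inj: "inj_on (\<lambda>L. L h0) E"
  proof (rule inj_onI, rule ccontr)
    fix L1 L2 assume "L1 \<in> E" "L2 \<in> E" "L1 h0 = L2 h0" "L1 \<noteq> L2"
    then have mem: "(L1, L2) \<in> {(L, L'). L \<in> E \<and> L' \<in> E \<and> L \<noteq> L'}" by simp
    have "(\<lambda>h. L1 h - L2 h) = (\<lambda>(L, L'). \<lambda>h. L h - L' h) (L1, L2)" by simp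
    then have "(\<lambda>h. L1 h - L2 h) \<in> ?P" using mem by (rule image_eqI)
    from bspec[OF h0(2) this] have "L1 h0 - L2 h0 \<noteq> 0" by simp
    then show False using \<open>L1 h0 = L2 h0\<close> by linarith
  qed
  have all: "(\<Sum>L\<in>E. c L * exp (t * L h0)) = 0" for t
  proof -
    have s: "sum (\<lambda>i. t * h0 i) UNIV = 0" using h0(1) by (simp add: sum_distrib_left[symmetric])
    have "(\<Sum>L\<in>E. c L * exp (t * L h0)) = (\<Sum>L\<in>E. c L * exp (L (\<lambda>i. t * h0 i)))"
    proof (rule sum.cong[OF refl])
      fix L assume "L \<in> E"
      then obtain w where w: "L = Lw w" using EL by blast
      show "c L * exp (t * L h0) = c L * exp (L (\<lambda>i. t * h0 i))" unfolding w Lw_scale[OF h0(1)] ..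
    qed
    also have "\<dots> = 0" using z[OF s] .
    finally show ?thesis .
  qed
  show ?thesis by (rule exp_indep[of E "\<lambda>L. L h0" c L, OF fin inj all L])
qed


definition dgx :: "('n \<times> 'n \<Rightarrow> nat) \<Rightarrow> bool" where
  "dgx e \<longleftrightarrow> (\<forall>i j. i \<noteq> j \<longrightarrow> e (i, j) = 0)"

definition wt :: "('n \<times> 'n \<Rightarrow> nat) \<Rightarrow> 'n \<Rightarrow> real" where
  "wt e = (\<lambda>i. real (e (i, i)))"

lemma prod_Dg:
  "(\<Prod>p\<in>(UNIV::('n::finite \<times> 'n) set). (Dg h $ fst p $ snd p) ^ (e p)) =
     (if dgx e then exp (\<Sum>i\<in>UNIV. wt e i * h i) else 0)"
proof -
  have "(\<Prod>p\<in>(UNIV::('n \<times> 'n) set). (Dg h $ fst p $ snd p) ^ (e p)) =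
        (\<Prod>i\<in>UNIV. \<Prod>j\<in>UNIV. (Dg h $ i $ j) ^ (e (i, j)))"
    unfolding UNIV_Times_UNIV[symmetric] prod.cartesian_product by (simp add: case_prod_beta)
  also have "\<dots> = (if dgx e then exp (\<Sum>i\<in>UNIV. wt e i * h i) else 0)"
  proof (cases "dgx e")
    case True
    have "(\<Prod>j\<in>UNIV. (Dg h $ i $ j) ^ (e (i, j))) = exp (wt e i * h i)" for i
    proof -
      have "(\<Prod>j\<in>UNIV. (Dg h $ i $ j) ^ (e (i, j))) = (\<Prod>j\<in>UNIV. if j = i then exp (h i) ^ e (i, i) else 1)"
        using True by (intro prod.cong) (auto simp: Dg_def dgx_def)
      also have "\<dots> = exp (h i) ^ e (i, i)" by simp
      also have "\<dots> = exp (wt e i * h i)" by (simp add: wt_def exp_of_nat_mult)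
      finally show ?thesis .
    qed
    then show ?thesis using True by (simp add: exp_sum)
  next
    case False
    then obtain i j where ij: "i \<noteq> j" "e (i, j) \<noteq> 0" by (auto simp: dgx_def)
    have "(\<Prod>j\<in>UNIV. (Dg h $ i $ j) ^ (e (i, j))) = 0"
      using ij by (intro prod_zero) (auto simp: Dg_def intro!: bexI[of _ j])
    then have "(\<Prod>i\<in>UNIV. \<Prod>j\<in>UNIV. (Dg h $ i $ j) ^ (e (i, j))) = 0"
      by (intro prod_zero) auto
    then show ?thesis using False by simp
  qed
  finally show ?thesis .
qed

lemma rho_expand:
  fixes \<rho> :: "real^'n::finite^'n \<Rightarrow> real^'m^'m"
  assumes rr: "rat_rep \<rho>"
  shows "\<exists>E C. finite E \<and> (\<forall>L\<in>E. \<exists>w. L = Lw w) \<and>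
     (\<forall>h. sum h UNIV = 0 \<longrightarrow> (\<forall>a b. \<rho> (Dg h) $ a $ b = (\<Sum>L\<in>E. exp (L h) * C L a b)))"
proof -
  have "\<forall>ab. \<exists>Sc. finite (fst Sc) \<and> (\<forall>g. \<rho> g $ fst ab $ snd ab = (\<Sum>e\<in>fst Sc. of_rat (snd Sc e) * (\<Prod>p\<in>UNIV. (g $ fst p $ snd p) ^ e p)))"
  proof
    fix ab :: "'m \<times> 'm"
    have "rat_poly_fun (\<lambda>g. \<rho> g $ fst ab $ snd ab)" using rr unfolding rat_rep_def by blast
    then obtain S c where "finite S" "\<forall>g. \<rho> g $ fst ab $ snd ab = (\<Sum>e\<in>S. of_rat (c e) * (\<Prod>p\<in>UNIV. (g $ fst p $ snd p) ^ e p))"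
      unfolding rat_poly_fun_def by blast
    then show "\<exists>Sc. finite (fst Sc) \<and> (\<forall>g. \<rho> g $ fst ab $ snd ab = (\<Sum>e\<in>fst Sc. of_rat (snd Sc e) * (\<Prod>p\<in>UNIV. (g $ fst p $ snd p) ^ e p)))"
      by (intro exI[of _ "(S, c)"]) simp
  qed
  then have "\<exists>f. \<forall>ab. finite (fst (f ab)) \<and> (\<forall>g. \<rho> g $ fst ab $ snd ab = (\<Sum>e\<in>fst (f ab). of_rat (snd (f ab) e) * (\<Prod>p\<in>UNIV. (g $ fst p $ snd p) ^ e p)))"
    by (rule choice)
  then obtain f where f0: "\<forall>ab. finite (fst (f ab)) \<and> (\<forall>g. \<rho> g $ fst ab $ snd ab = (\<Sum>e\<in>fst (f ab). of_rat (snd (f ab) e) * (\<Prod>p\<in>UNIV. (g $ fst p $ snd p) ^ e p)))"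
    by blast
  have f: "\<And>ab. finite (fst (f ab))" "\<And>ab g. \<rho> g $ fst ab $ snd ab = (\<Sum>e\<in>fst (f ab). of_rat (snd (f ab) e) * (\<Prod>p\<in>UNIV. (g $ fst p $ snd p) ^ e p))"
    using f0 by blast+
  define S where "S a b = fst (f (a, b))" for a b
  define c where "c a b = snd (f (a, b))" for a b
  have Sc: "\<And>a b. finite (S a b)"
    "\<And>a b g. \<rho> g $ a $ b = (\<Sum>e\<in>S a b. of_rat (c a b e) * (\<Prod>p\<in>UNIV. (g $ fst p $ snd p) ^ e p))"
    unfolding S_def c_def using f(1) f(2)[where ab="(a, b)" for a b] by simp_all
  define E where "E = (\<Union>a b. (\<lambda>e. Lw (wt e)) ` S a b)"
  define C where "C L a b = (\<Sum>e\<in>{e\<in>S a b. dgx e \<and> Lw (wt e) = L}. (of_rat (c a b e) :: real))" for L a b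
  have finE: "finite E" unfolding E_def using Sc(1) by simp
  have EL: "\<forall>L\<in>E. \<exists>w. L = Lw w" unfolding E_def by auto
  have main: "\<rho> (Dg h) $ a $ b = (\<Sum>L\<in>E. exp (L h) * C L a b)" if h: "sum h UNIV = 0" for h a b
  proof -
    let ?S = "{e\<in>S a b. dgx e}"
    let ?f = "\<lambda>e. of_rat (c a b e) * exp (Lw (wt e) h)"
    have "\<rho> (Dg h) $ a $ b = (\<Sum>e\<in>S a b. of_rat (c a b e) * (if dgx e then exp (\<Sum>i\<in>UNIV. wt e i * h i) else 0))"
      unfolding Sc(2)[of "Dg h"] prod_Dg by (rule refl)
    also have "\<dots> = (\<Sum>e\<in>S a b. if dgx e then ?f e else 0)"
      using h by (intro sum.cong) (auto simp: Lw_def)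
    also have "\<dots> = sum ?f ?S"
      using Sc(1) by (simp add: sum.inter_filter)
    also have "\<dots> = (\<Sum>L\<in>E. sum ?f {x\<in>?S. Lw (wt x) = L})"
      using Sc(1) finE by (intro sum.group[symmetric]) (auto simp: E_def)
    also have "\<dots> = (\<Sum>L\<in>E. exp (L h) * C L a b)"
    proof (rule sum.cong)
      fix L assume "L \<in> E"
      have "sum ?f {x\<in>?S. Lw (wt x) = L} = (\<Sum>e\<in>{e\<in>S a b. dgx e \<and> Lw (wt e) = L}. of_rat (c a b e) * exp (L h))"
        by (intro sum.cong) auto
      then show "sum ?f {x\<in>?S. Lw (wt x) = L} = exp (L h) * C L a b"
        by (simp add: C_def sum_distrib_left mult.commute)
    qed simp
    finally show ?thesis .
  qed
  show ?thesis using finE EL main by blast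
qed


lemma Lw_add: "sum (h::'n::finite \<Rightarrow> real) UNIV = 0 \<Longrightarrow> sum k UNIV = 0 \<Longrightarrow> Lw w (\<lambda>i. h i + k i) = Lw w h + Lw w k"
  unfolding Lw_def by (simp add: sum.distrib algebra_simps)

lemma proj_props:
  fixes \<rho> :: "real^'n::finite^'n \<Rightarrow> real^'m^'m"
  assumes rr: "rat_rep \<rho>" and finE: "finite E" and EL: "\<forall>L\<in>E. \<exists>w. L = Lw w"
    and ex: "\<forall>h. sum h UNIV = 0 \<longrightarrow> (\<forall>a b. \<rho> (Dg h) $ a $ b = (\<Sum>L\<in>E. exp (L h) * C L a b))"
  shows "\<And>L (k::'n \<Rightarrow> real). L \<in> E \<Longrightarrow> sum k UNIV = 0 \<Longrightarrow> (\<chi> a b. C L a b) ** \<rho> (Dg k) = exp (L k) *\<^sub>R (\<chi> a b. C L a b)"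
    and "(\<Sum>L\<in>E. (\<chi> a b. C L a b)) = mat 1"
proof -
  fix L and k :: "'n \<Rightarrow> real" assume L: "L \<in> E" and k: "sum k UNIV = 0"
  have "((\<chi> a b. C L a b) ** \<rho> (Dg k)) $ a $ b = exp (L k) * C L a b" for a b
  proof -
    let ?D = "\<lambda>L. (\<Sum>c\<in>UNIV. C L a c * \<rho> (Dg k) $ c $ b) - exp (L k) * C L a b"
    have z: "(\<Sum>L\<in>E. ?D L * exp (L h)) = 0" if h: "sum h UNIV = 0" for h
    proof -
      have hk: "sum (\<lambda>i. h i + k i) UNIV = 0" using h k by (simp add: sum.distrib)
      have "(\<rho> (Dg h) ** \<rho> (Dg k)) $ a $ b = \<rho> (Dg (\<lambda>i. h i + k i)) $ a $ b"
        using rr Dg_SL[OF h] Dg_SL[OF k] by (simp add: Dg_add rat_rep_mult)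
      moreover have "(\<rho> (Dg h) ** \<rho> (Dg k)) $ a $ b = (\<Sum>L\<in>E. exp (L h) * (\<Sum>c\<in>UNIV. C L a c * \<rho> (Dg k) $ c $ b))"
      proof -
        have "(\<rho> (Dg h) ** \<rho> (Dg k)) $ a $ b = (\<Sum>c\<in>UNIV. (\<Sum>L\<in>E. exp (L h) * C L a c) * \<rho> (Dg k) $ c $ b)"
          unfolding matrix_matrix_mult_def using ex h by simp
        also have "\<dots> = (\<Sum>c\<in>UNIV. \<Sum>L\<in>E. exp (L h) * (C L a c * \<rho> (Dg k) $ c $ b))"
          by (simp add: sum_distrib_right mult.assoc)
        also have "\<dots> = (\<Sum>L\<in>E. \<Sum>c\<in>UNIV. exp (L h) * (C L a c * \<rho> (Dg k) $ c $ b))"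
          by (rule sum.swap)
        also have "\<dots> = (\<Sum>L\<in>E. exp (L h) * (\<Sum>c\<in>UNIV. C L a c * \<rho> (Dg k) $ c $ b))"
          by (simp add: sum_distrib_left)
        finally show ?thesis .
      qed
      moreover have "\<rho> (Dg (\<lambda>i. h i + k i)) $ a $ b = (\<Sum>L\<in>E. exp (L h) * (exp (L k) * C L a b))"
      proof -
        have "\<rho> (Dg (\<lambda>i. h i + k i)) $ a $ b = (\<Sum>L\<in>E. exp (L (\<lambda>i. h i + k i)) * C L a b)"
          using ex hk by blast
        also have "\<dots> = (\<Sum>L\<in>E. exp (L h) * (exp (L k) * C L a b))"
          using EL Lw_add[OF h k] by (intro sum.cong) (auto simp: exp_add)
        finally show ?thesis .
      qed
      ultimately have "(\<Sum>L\<in>E. exp (L h) * (\<Sum>c\<in>UNIV. C L a c * \<rho> (Dg k) $ c $ b)) = (\<Sum>L\<in>E. exp (L h) * (exp (L k) * C L a b))"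
        by simp
      then show ?thesis by (simp add: algebra_simps sum_subtractf)
    qed
    have "?D L = 0" by (rule indep_L[OF finE EL z L])
    then show ?thesis unfolding matrix_matrix_mult_def by simp
  qed
  then show "(\<chi> a b. C L a b) ** \<rho> (Dg k) = exp (L k) *\<^sub>R (\<chi> a b. C L a b)"
    by (simp add: vec_eq_iff)
next
  have z: "sum (\<lambda>i::'n. 0::real) UNIV = 0" by simp
  have "mat 1 $ a $ b = (\<Sum>L\<in>E. C L a b)" for a b
  proof -
    have "\<rho> (Dg (\<lambda>i. 0)) $ a $ b = (\<Sum>L\<in>E. exp (L (\<lambda>i. 0)) * C L a b)" using ex z by blast
    moreover have "\<rho> (Dg (\<lambda>i. 0)) = mat 1" using rr by (simp add: Dg_zero rat_rep_def)
    moreover have "L (\<lambda>i. 0) = 0" if "L \<in> E" for L using EL that by (auto simp: Lw_def)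
    then have "(\<Sum>L\<in>E. exp (L (\<lambda>i. 0)) * C L a b) = (\<Sum>L\<in>E. C L a b)" by (intro sum.cong) auto
    ultimately show ?thesis by simp
  qed
  then show "(\<Sum>L\<in>E. (\<chi> a b. C L a b)) = mat 1"
    by (simp add: vec_eq_iff sum_component)
qed


lemma isn_zero: "is_norm N \<Longrightarrow> N 0 = 0"
proof -
  assume n: "is_norm N"
  have "N ((0::real) *\<^sub>R 0) = \<bar>0::real\<bar> * N 0" using n unfolding is_norm_def by blast
  then show ?thesis by simp
qed

lemma isn_neg: "is_norm N \<Longrightarrow> N (- x) = N x"
proof -
  assume n: "is_norm N"
  have "N ((-1::real) *\<^sub>R x) = \<bar>-1::real\<bar> * N x" using n unfolding is_norm_def by blast
  then show ?thesis by simp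
qed

lemma isn_nonneg: "is_norm N \<Longrightarrow> N x \<ge> 0"
proof -
  assume n: "is_norm N"
  have "N (x + - x) \<le> N x + N (- x)" using n unfolding is_norm_def by blast
  then show ?thesis using isn_zero[OF n] isn_neg[OF n] by simp
qed

lemma isn_sum: assumes n: "is_norm N" and fin: "finite A" shows "N (sum f A) \<le> (\<Sum>i\<in>A. N (f i))"
  using fin
proof (induction A rule: finite_induct)
  case empty then show ?case using isn_zero[OF n] by simp
next
  case (insert a F)
  have "N (f a + sum f F) \<le> N (f a) + N (sum f F)" using n unfolding is_norm_def by blast
  then show ?case using insert by simp
qed

lemma isn_upper:
  fixes N :: "real^'m \<Rightarrow> real"
  assumes n: "is_norm N" shows "\<exists>B>0. \<forall>x. N x \<le> B * norm x"
proof -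
  let ?B = "(\<Sum>i\<in>UNIV. N (axis i (1::real))) + 1"
  have pos: "?B > 0" using isn_nonneg[OF n] by (simp add: sum_nonneg add_nonneg_pos)
  have "N x \<le> ?B * norm x" for x
  proof -
    have "N x = N (\<Sum>i\<in>UNIV. x $ i *\<^sub>R axis i 1)" using basis_expansion[of x] by (simp add: scalar_mult_eq_scaleR)
    also have "\<dots> \<le> (\<Sum>i\<in>UNIV. N (x $ i *\<^sub>R axis i 1))" by (rule isn_sum[OF n]) simp
    also have "\<dots> = (\<Sum>i\<in>UNIV. \<bar>x $ i\<bar> * N (axis i 1))" using n by (simp add: is_norm_def)
    also have "\<dots> \<le> (\<Sum>i\<in>UNIV. norm x * N (axis i 1))"
      by (intro sum_mono mult_right_mono component_le_norm_cart isn_nonneg[OF n])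
    also have "\<dots> = norm x * (\<Sum>i\<in>UNIV. N (axis i 1))" by (simp add: sum_distrib_left)
    also have "\<dots> \<le> ?B * norm x" by (simp add: algebra_simps)
    finally show ?thesis .
  qed
  then show ?thesis using pos by blast
qed

lemma isn_lower:
  fixes N :: "real^'m \<Rightarrow> real"
  assumes n: "is_norm N" shows "\<exists>b>0. \<forall>x. b * norm x \<le> N x"
proof -
  obtain B where B: "B > 0" "\<And>x. N x \<le> B * norm x" using isn_upper[OF n] by blast
  have lip: "\<bar>N x - N y\<bar> \<le> B * norm (x - y)" for x y
  proof -
    have "N ((x - y) + y) \<le> N (x - y) + N y" using n unfolding is_norm_def by blast
    then have "N x \<le> N (x - y) + N y" by simp
    moreover have "N ((y - x) + x) \<le> N (y - x) + N x" using n unfolding is_norm_def by blast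
    then have "N y \<le> N (y - x) + N x" by simp
    moreover have "N (y - x) = N (x - y)" using isn_neg[OF n, of "x - y"] by simp
    ultimately have "\<bar>N x - N y\<bar> \<le> N (x - y)" by linarith
    then show ?thesis using B(2)[of "x - y"] by linarith
  qed
  have cont: "continuous_on (sphere 0 1) N"
    unfolding continuous_on_iff
  proof (intro ballI allI impI)
    fix x e assume "x \<in> sphere (0::real^'m) 1" "(e::real) > 0"
    show "\<exists>d>0. \<forall>x'\<in>sphere 0 1. dist x' x < d \<longrightarrow> dist (N x') (N x) < e"
    proof (intro exI[of _ "e / B"] conjI ballI impI)
      show "e / B > 0" using B \<open>e > 0\<close> by simp
      fix x' assume "dist x' x < e / B"
      then have "B * norm (x' - x) < e" using B by (simp add: dist_norm field_simps)
      then show "dist (N x') (N x) < e" using lip[of x' x] by (simp add: dist_real_def)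
    qed
  qed
  have ne: "sphere (0::real^'m) 1 \<noteq> {}"
  proof -
    obtain k :: 'm where True by simp
    have "axis k (1::real) \<in> sphere 0 1" by (simp add: norm_axis_1)
    then show ?thesis by blast
  qed
  obtain x0 where x0: "x0 \<in> sphere 0 1" "\<And>y. y \<in> sphere 0 1 \<Longrightarrow> N x0 \<le> N y"
    using continuous_attains_inf[OF compact_sphere ne cont] by blast
  have b: "N x0 > 0"
  proof -
    have "x0 \<noteq> 0" using x0(1) by auto
    then have "N x0 \<noteq> 0" using n unfolding is_norm_def by blast
    then show ?thesis using isn_nonneg[OF n, of x0] by simp
  qed
  have "N x0 * norm x \<le> N x" for x
  proof (cases "x = 0")
    case True then show ?thesis using isn_zero[OF n] by simp
  next
    case False
    have "(1 / norm x) *\<^sub>R x \<in> sphere 0 1" using False by simp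
    then have "N x0 \<le> N ((1 / norm x) *\<^sub>R x)" by (rule x0(2))
    also have "\<dots> = N x / norm x" using n False by (simp add: is_norm_def)
    finally show ?thesis using False by (simp add: field_simps)
  qed
  then show ?thesis using b by blast
qed

lemma mat_bound: "\<exists>K\<ge>0. \<forall>x. norm ((A::real^'m^'m) *v x) \<le> K * norm x"
  using bounded_linear.nonneg_bounded[OF matrix_vector_mul_bounded_linear[of A]]
  by (auto simp: mult.commute)


lemma sum_mv: "finite E \<Longrightarrow> (\<Sum>L\<in>E. A L) *v x = (\<Sum>L\<in>E. A L *v x)"
  by (induction E rule: finite_induct) (auto simp: matrix_vector_mult_add_rdistrib)

lemma sum_blocks:
  fixes h :: "'n::{finite,linorder} \<Rightarrow> real"
  assumes cp: "consec_partition Is" and hb: "\<forall>t<length Is. sum h (Is ! t) = 0"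
  shows "sum h UNIV = 0"
proof -
  have inner: "(\<Sum>t<length Is. if i \<in> Is ! t then h i else 0) = h i" for i
  proof -
    obtain t0 where t0: "t0 < length Is" "i \<in> Is ! t0" using cp_cover[OF cp] by blast
    have "(\<Sum>t<length Is. if i \<in> Is ! t then h i else 0) = (\<Sum>t<length Is. if t = t0 then h i else 0)"
    proof (rule sum.cong[OF refl])
      fix t assume t: "t \<in> {..<length Is}"
      have "i \<in> Is ! t \<longleftrightarrow> t = t0"
      proof
        assume "i \<in> Is ! t" then show "t = t0" using cp_disj[OF cp _ t0(1) _ t0(2), of t] t by simp
      next
        assume "t = t0" then show "i \<in> Is ! t" using t0(2) by simp
      qed
      then show "(if i \<in> Is ! t then h i else 0) = (if t = t0 then h i else 0)" by simp
    qed
    also have "\<dots> = h i" using t0(1) by simp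
    finally show ?thesis .
  qed
  have "sum h UNIV = (\<Sum>i\<in>UNIV. \<Sum>t<length Is. if i \<in> Is ! t then h i else 0)"
    by (rule sum.cong[OF refl]) (rule inner[symmetric])
  also have "\<dots> = (\<Sum>t<length Is. \<Sum>i\<in>UNIV. if i \<in> Is ! t then h i else 0)"
    by (rule sum.swap)
  also have "\<dots> = (\<Sum>t<length Is. sum h (Is ! t))"
    by (rule sum.cong[OF refl]) (simp add: sum.If_cases)
  also have "\<dots> = 0" using hb by simp
  finally show ?thesis .
qed

theorem lemma3p5:
  fixes Is :: "('n::{finite,linorder}) set list"
    and \<rho> :: "((real,'n) vec,'n) vec \<Rightarrow> real^'m^'m"
    and N :: "real^'m \<Rightarrow> real"
  assumes "CARD('n) \<ge> 2"
    and "consec_partition Is"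
    and "rat_rep \<rho>" and "irreducible_rep \<rho>" and "nontrivial_rep \<rho>"
    and "is_norm N"
  shows "\<exists>C2>0. \<forall>v\<in>fixed_vecs \<rho> (KU_grp Is). \<forall>d\<in>A_plus Is. N (\<rho> d *v v) \<ge> C2 * N v"
proof -
  note cp = assms(2) and rr = assms(3) and n = assms(6)
  obtain E C where finE: "finite E" and EL: "\<forall>L\<in>E. \<exists>w. L = Lw w"
    and ex: "\<forall>h. sum h UNIV = 0 \<longrightarrow> (\<forall>a b. \<rho> (Dg h) $ a $ b = (\<Sum>L\<in>E. exp (L h) * C L a b))"
    using rho_expand[OF rr] by blast
  define Cm where "Cm L = (\<chi> a b. C L a b)" for L
  have P1: "\<And>L k. L \<in> E \<Longrightarrow> sum k UNIV = 0 \<Longrightarrow> Cm L ** \<rho> (Dg k) = exp (L k) *\<^sub>R Cm L"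
    unfolding Cm_def by (rule proj_props(1)[OF rr finE EL ex])
  have P2: "(\<Sum>L\<in>E. Cm L) = mat 1"
    unfolding Cm_def by (rule proj_props(2)[OF rr finE EL ex])
  let ?W = "fixed_vecs \<rho> (KU_grp Is)"
  have "\<forall>\<sigma>\<in>Gp Is. \<exists>M. \<forall>h v. sum h UNIV = 0 \<longrightarrow> v \<in> ?W \<longrightarrow> \<rho> (Dg (h \<circ> \<sigma>)) *v v = M *v (\<rho> (Dg h) *v v)"
    using Gp_good[OF rr cp] unfolding good_def by blast
  then have "\<exists>Mf. \<forall>\<sigma>\<in>Gp Is. \<forall>h v. sum h UNIV = 0 \<longrightarrow> v \<in> ?W \<longrightarrow> \<rho> (Dg (h \<circ> \<sigma>)) *v v = Mf \<sigma> *v (\<rho> (Dg h) *v v)"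
    by (rule bchoice)
  then obtain Mf where Mf0: "\<forall>\<sigma>\<in>Gp Is. \<forall>h v. sum h UNIV = 0 \<longrightarrow> v \<in> ?W \<longrightarrow> \<rho> (Dg (h \<circ> \<sigma>)) *v v = Mf \<sigma> *v (\<rho> (Dg h) *v v)"
    by blast
  have Mf: "\<And>\<sigma> h v. \<sigma> \<in> Gp Is \<Longrightarrow> sum h UNIV = 0 \<Longrightarrow> v \<in> ?W \<Longrightarrow>
      \<rho> (Dg (h \<circ> \<sigma>)) *v v = Mf \<sigma> *v (\<rho> (Dg h) *v v)" using Mf0 by blast
  have "\<forall>L. \<exists>K. K \<ge> 0 \<and> (\<forall>x. norm (Cm L *v x) \<le> K * norm x)" using mat_bound by blast
  then have "\<exists>KC. \<forall>L. KC L \<ge> 0 \<and> (\<forall>x. norm (Cm L *v x) \<le> KC L * norm x)" by (rule choice)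
  then obtain KC where KC0: "\<forall>L. KC L \<ge> 0 \<and> (\<forall>x. norm (Cm L *v x) \<le> KC L * norm x)" by blast
  have KC: "\<And>L. KC L \<ge> 0" "\<And>L x. norm (Cm L *v x) \<le> KC L * norm x" using KC0 by blast+
  have "\<forall>\<sigma>. \<exists>K. K \<ge> 0 \<and> (\<forall>x. norm (Mf \<sigma> *v x) \<le> K * norm x)" using mat_bound by blast
  then have "\<exists>KM. \<forall>\<sigma>. KM \<sigma> \<ge> 0 \<and> (\<forall>x. norm (Mf \<sigma> *v x) \<le> KM \<sigma> * norm x)" by (rule choice)
  then obtain KM where KM0: "\<forall>\<sigma>. KM \<sigma> \<ge> 0 \<and> (\<forall>x. norm (Mf \<sigma> *v x) \<le> KM \<sigma> * norm x)" by blast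
  have KM: "\<And>\<sigma>. KM \<sigma> \<ge> 0" "\<And>\<sigma> x. norm (Mf \<sigma> *v x) \<le> KM \<sigma> * norm x" using KM0 by blast+
  define KCs where "KCs = (\<Sum>L\<in>E. KC L)"
  define KMs where "KMs = (\<Sum>\<sigma>\<in>Gp Is. KM \<sigma>)"
  have KCs: "KC L \<le> KCs" if "L \<in> E" for L
    unfolding KCs_def using finE that KC(1) by (intro member_le_sum) auto
  have KMs: "KM \<sigma> \<le> KMs" if "\<sigma> \<in> Gp Is" for \<sigma>
    unfolding KMs_def using Gp_finite that KM(1) by (intro member_le_sum) auto
  have KCs0: "KCs \<ge> 0" unfolding KCs_def using KC(1) by (simp add: sum_nonneg)
  have KMs0: "KMs \<ge> 0" unfolding KMs_def using KM(1) by (simp add: sum_nonneg)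
  define Q where "Q = real (card E) * KCs * KMs + 1"
  have Q0: "Q > 0" unfolding Q_def using KCs0 KMs0 by (simp add: add_nonneg_pos)
  have key: "norm v \<le> Q * norm (\<rho> (Dg h) *v v)"
    if v: "v \<in> ?W" and hb: "\<forall>t<length Is. sum h (Is ! t) = 0" for v h
  proof -
    have h: "sum h UNIV = 0" by (rule sum_blocks[OF cp hb])
    let ?y = "\<rho> (Dg h) *v v"
    have each: "norm (Cm L *v v) \<le> KCs * KMs * norm ?y" if L: "L \<in> E" for L
    proof -
      obtain w where w: "L = Lw w" using EL L by blast
      obtain \<sigma> where \<sigma>: "\<sigma> \<in> Gp Is" "(\<Sum>i\<in>UNIV. w i * h (\<sigma> i)) \<ge> 0"
        using avg_exists[OF cp hb] by blast
      have hs: "sum (h \<circ> \<sigma>) UNIV = 0"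
        using h sum.permute[where g=h, of \<sigma> UNIV] \<sigma>(1) by (simp add: Gp_def)
      have Lpos: "L (h \<circ> \<sigma>) \<ge> 0" using w hs \<sigma>(2) by (simp add: Lw_def)
      have "norm (Cm L *v v) \<le> exp (L (h \<circ> \<sigma>)) * norm (Cm L *v v)"
      proof -
        have "1 \<le> exp (L (h \<circ> \<sigma>))" using Lpos by simp
        from mult_right_mono[OF this norm_ge_zero[of "Cm L *v v"]] show ?thesis by simp
      qed
      also have "\<dots> = norm (Cm L *v (\<rho> (Dg (h \<circ> \<sigma>)) *v v))"
        using P1[OF L hs] by (simp add: matrix_vector_mul_assoc scaleR_matrix_vector_assoc[symmetric])
      also have "\<dots> \<le> KC L * norm (\<rho> (Dg (h \<circ> \<sigma>)) *v v)" by (rule KC(2))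
      also have "\<rho> (Dg (h \<circ> \<sigma>)) *v v = Mf \<sigma> *v ?y" by (rule Mf[OF \<sigma>(1) h v])
      also have "KC L * norm (Mf \<sigma> *v ?y) \<le> KC L * (KM \<sigma> * norm ?y)"
        by (rule mult_left_mono[OF KM(2) KC(1)])
      also have "\<dots> \<le> KCs * (KMs * norm ?y)"
        using KCs[OF L] KMs[OF \<sigma>(1)] KC(1) KM(1) KCs0 KMs0
        by (intro mult_mono) auto
      finally show ?thesis by simp
    qed
    have "v = (\<Sum>L\<in>E. Cm L) *v v" using P2 by simp
    also have "\<dots> = (\<Sum>L\<in>E. Cm L *v v)" by (rule sum_mv[OF finE])
    finally have "norm v = norm (\<Sum>L\<in>E. Cm L *v v)" by simp
    also have "\<dots> \<le> (\<Sum>L\<in>E. norm (Cm L *v v))" by (rule norm_sum)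
    also have "\<dots> \<le> (\<Sum>L\<in>E. KCs * KMs * norm ?y)" using each by (rule sum_mono)
    also have "\<dots> = real (card E) * KCs * KMs * norm ?y" by simp
    also have "\<dots> \<le> Q * norm ?y" unfolding Q_def by (simp add: algebra_simps)
    finally show ?thesis .
  qed
  obtain B where B: "B > 0" "\<And>x. N x \<le> B * norm x" using isn_upper[OF n] by blast
  obtain b where b: "b > 0" "\<And>x. b * norm x \<le> N x" using isn_lower[OF n] by blast
  show ?thesis
  proof (intro exI[of _ "b / (Q * B)"] conjI ballI)
    show "b / (Q * B) > 0" using b B Q0 by simp
    fix v d assume v: "v \<in> ?W" and d: "d \<in> A_plus Is"
    obtain x where x: "d = (\<chi> i j. if i = j then x i else 0)" "\<And>i. x i > 0"
      "\<forall>t<length Is. (\<Prod>i\<in>Is ! t. x i) = 1"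
      using d unfolding A_plus_def by blast
    define h where "h i = ln (x i)" for i
    have dh: "d = Dg h" unfolding x(1) Dg_def h_def using x(2) by (simp add: vec_eq_iff)
    have hb: "\<forall>t<length Is. sum h (Is ! t) = 0"
    proof (intro allI impI)
      fix t assume t: "t < length Is"
      have "sum h (Is ! t) = ln (\<Prod>i\<in>Is ! t. x i)"
      proof -
        have nz: "x i \<noteq> 0" for i using x(2)[of i] by linarith
        show ?thesis by (subst ln_prod) (auto simp: nz x(2) h_def)
      qed
      then show "sum h (Is ! t) = 0" using x(3) t by simp
    qed
    have k: "norm v \<le> Q * norm (\<rho> d *v v)" using key[OF v hb] dh by simp
    have "b / (Q * B) * N v \<le> b / (Q * B) * (B * norm v)"
      using B(2)[of v] b B Q0 by (intro mult_left_mono) auto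
    also have "\<dots> = b / Q * norm v" using B by simp
    also have "\<dots> \<le> b / Q * (Q * norm (\<rho> d *v v))"
      using k b Q0 by (intro mult_left_mono) auto
    also have "\<dots> = b * norm (\<rho> d *v v)" using Q0 by simp
    also have "\<dots> \<le> N (\<rho> d *v v)" by (rule b(2))
    finally show "b / (Q * B) * N v \<le> N (\<rho> d *v v)" .
  qed
qed

end
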